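(* Let $f(x)=x^5+px^4+qx^3+rx^2+sx+t$ with real coefficients, and suppose $D=0$, $L_1=0$, $L_2\neq 0$ and $D_2=0$ (so $f$ has one triple root and two simple roots). Then the triple root of $f$ is $d=C_{2,1}/L_2$, and $f(y+d)=y^3\bigl(y^2+F_7y+F_6\bigr)$ where $F_7=p+5d$ and $F_6=q+4pd+10d^2$. If $L_2>0$ (all roots real), then: (a) if $F_6>0$ and $F_7<0$: triple $<$ single $<$ single; (b) if $F_6<0$: single $<$ triple $<$ single; (c) if $F_6>0$ and $F_7>0$: single $<$ single $<$ triple.
   Context: Let $\alpha_1,\dots,\alpha_5\in\mathbb{C}$ be the roots of $f$ listed with multiplicity. $D=\prod_{1\le i<j\le 5}(\alpha_i-\alpha_j)^2$ is the discriminant of $f$. $L_2=40qs-16p^2s-8rp^3+38rpq+3p^2q^2-12q^3-45r^2$. $L_1=-264ps^2r-12p^3tq^2+36r^3pq-124srpq^2+28srp^3q+260sptq-132p^2qrt+240pr^2t+234sqr^2+32p^4tr+48ptq^3-56sp^3t-80q^2rt+194qs^2p^2-600str-6q^3sp^2+2p^2q^2r^2-12sr^2p^2-54r^4+320s^3-8q^3r^2-8r^3p^3+250qt^2-176q^2s^2+24q^4s-36p^4s^2-100p^2t^2$. $D_2=24p^2q^4s-1100q^3rt+800p^3qst-1735p^2q^2rt-3p^2qr^2s+20pq^3rs-600p^2rst-1150pq^2st+5475pqr^2t-1380pqrs^2+1500qrst+6p^3qr^3+p^4q^2r^2-128p^6rt+660pq^4t-136p^5st-3p^4q^3s-236p^4qs^2+337p^2q^2s^2+48p^5q^2t-357p^3q^3t-12p^4r^2s-45pr^3s+60q^2r^2s-8p^2q^3r^2-500p^2qt^2-24pq^2r^3-1380p^3r^2t+408p^3rs^2-4p^5qrs+1028p^4qrt+11p^3q^2rs+36p^6s^2+100p^4t^2+9p^2r^4-48q^5s+16q^4r^2+160q^3s^2+625q^2t^2-3375r^3t+900r^2s^2$.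 $C_{2,1}=6sp^3+4q^2r-3pr^2-21spq+30sr+10p^2t-25tq-p^2rq$. *)

theory Defs
  imports Complex_Main "HOL-Computational_Algebra.Polynomial"
begin

definition quintic :: "real \<Rightarrow> real \<Rightarrow> real \<Rightarrow> real \<Rightarrow> real \<Rightarrow> real poly" where
  "quintic p q r s t = [:t, s, r, q, p, 1:]"

definition roots5 :: "real poly \<Rightarrow> complex list" where
  "roots5 f = (SOME as. length as = 5 \<and>
      map_poly complex_of_real f = prod_list (map (\<lambda>a. [:-a, 1:]) as))"

definition disc5 :: "real poly \<Rightarrow> complex" where
  "disc5 f = (let as = roots5 f in
      \<Prod>i<5. \<Prod>j\<in>{i<..<5}. (as ! i - as ! j)^2)"

definition L2 :: "real \<Rightarrow> real \<Rightarrow> real \<Rightarrow> real \<Rightarrow> real \<Rightarrow> real" where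
  "L2 p q r s t = 40*q*s - 16*p^2*s - 8*r*p^3 + 38*r*p*q + 3*p^2*q^2 - 12*q^3 - 45*r^2"

definition L1 :: "real \<Rightarrow> real \<Rightarrow> real \<Rightarrow> real \<Rightarrow> real \<Rightarrow> real" where
  "L1 p q r s t = -264*p*s^2*r - 12*p^3*t*q^2 + 36*r^3*p*q - 124*s*r*p*q^2 + 28*s*r*p^3*q
     + 260*s*p*t*q - 132*p^2*q*r*t + 240*p*r^2*t + 234*s*q*r^2 + 32*p^4*t*r + 48*p*t*q^3
     - 56*s*p^3*t - 80*q^2*r*t + 194*q*s^2*p^2 - 600*s*t*r - 6*q^3*s*p^2 + 2*p^2*q^2*r^2
     - 12*s*r^2*p^2 - 54*r^4 + 320*s^3 - 8*q^3*r^2 - 8*r^3*p^3 + 250*q*t^2 - 176*q^2*s^2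
     + 24*q^4*s - 36*p^4*s^2 - 100*p^2*t^2"

definition D2 :: "real \<Rightarrow> real \<Rightarrow> real \<Rightarrow> real \<Rightarrow> real \<Rightarrow> real" where
  "D2 p q r s t = 24*p^2*q^4*s - 1100*q^3*r*t + 800*p^3*q*s*t - 1735*p^2*q^2*r*t
     - 3*p^2*q*r^2*s + 20*p*q^3*r*s - 600*p^2*r*s*t - 1150*p*q^2*s*t + 5475*p*q*r^2*t
     - 1380*p*q*r*s^2 + 1500*q*r*s*t + 6*p^3*q*r^3 + p^4*q^2*r^2 - 128*p^6*r*t + 660*p*q^4*t
     - 136*p^5*s*t - 3*p^4*q^3*s - 236*p^4*q*s^2 + 337*p^2*q^2*s^2 + 48*p^5*q^2*t
     - 357*p^3*q^3*t - 12*p^4*r^2*s - 45*p*r^3*s + 60*q^2*r^2*s - 8*p^2*q^3*r^2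
     - 500*p^2*q*t^2 - 24*p*q^2*r^3 - 1380*p^3*r^2*t + 408*p^3*r*s^2 - 4*p^5*q*r*s
     + 1028*p^4*q*r*t + 11*p^3*q^2*r*s + 36*p^6*s^2 + 100*p^4*t^2 + 9*p^2*r^4 - 48*q^5*s
     + 16*q^4*r^2 + 160*q^3*s^2 + 625*q^2*t^2 - 3375*r^3*t + 900*r^2*s^2"

definition C21 :: "real \<Rightarrow> real \<Rightarrow> real \<Rightarrow> real \<Rightarrow> real \<Rightarrow> real" where
  "C21 p q r s t = 6*s*p^3 + 4*q^2*r - 3*p*r^2 - 21*s*p*q + 30*s*r + 10*p^2*t - 25*t*q - p^2*r*q"

end

theory Submission imports Defs "HOL-Computational_Algebra.Fundamental_Theorem_Algebra" begin

definition L1g :: "complex \<Rightarrow> complex \<Rightarrow> complex \<Rightarrow> complex \<Rightarrow> complex \<Rightarrow> complex" where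
  "L1g p q r s t = -264*p*s^2*r - 12*p^3*t*q^2 + 36*r^3*p*q - 124*s*r*p*q^2 + 28*s*r*p^3*q
     + 260*s*p*t*q - 132*p^2*q*r*t + 240*p*r^2*t + 234*s*q*r^2 + 32*p^4*t*r + 48*p*t*q^3
     - 56*s*p^3*t - 80*q^2*r*t + 194*q*s^2*p^2 - 600*s*t*r - 6*q^3*s*p^2 + 2*p^2*q^2*r^2
     - 12*s*r^2*p^2 - 54*r^4 + 320*s^3 - 8*q^3*r^2 - 8*r^3*p^3 + 250*q*t^2 - 176*q^2*s^2
     + 24*q^4*s - 36*p^4*s^2 - 100*p^2*t^2"

definition L2g :: "complex \<Rightarrow> complex \<Rightarrow> complex \<Rightarrow> complex \<Rightarrow> complex \<Rightarrow> complex" where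
  "L2g p q r s t = 40*q*s - 16*p^2*s - 8*r*p^3 + 38*r*p*q + 3*p^2*q^2 - 12*q^3 - 45*r^2"

definition D2g :: "complex \<Rightarrow> complex \<Rightarrow> complex \<Rightarrow> complex \<Rightarrow> complex \<Rightarrow> complex" where
  "D2g p q r s t = 24*p^2*q^4*s - 1100*q^3*r*t + 800*p^3*q*s*t - 1735*p^2*q^2*r*t
     - 3*p^2*q*r^2*s + 20*p*q^3*r*s - 600*p^2*r*s*t - 1150*p*q^2*s*t + 5475*p*q*r^2*t
     - 1380*p*q*r*s^2 + 1500*q*r*s*t + 6*p^3*q*r^3 + p^4*q^2*r^2 - 128*p^6*r*t + 660*p*q^4*t
     - 136*p^5*s*t - 3*p^4*q^3*s - 236*p^4*q*s^2 + 337*p^2*q^2*s^2 + 48*p^5*q^2*t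
     - 357*p^3*q^3*t - 12*p^4*r^2*s - 45*p*r^3*s + 60*q^2*r^2*s - 8*p^2*q^3*r^2
     - 500*p^2*q*t^2 - 24*p*q^2*r^3 - 1380*p^3*r^2*t + 408*p^3*r*s^2 - 4*p^5*q*r*s
     + 1028*p^4*q*r*t + 11*p^3*q^2*r*s + 36*p^6*s^2 + 100*p^4*t^2 + 9*p^2*r^4 - 48*q^5*s
     + 16*q^4*r^2 + 160*q^3*s^2 + 625*q^2*t^2 - 3375*r^3*t + 900*r^2*s^2"

definition C21g :: "complex \<Rightarrow> complex \<Rightarrow> complex \<Rightarrow> complex \<Rightarrow> complex \<Rightarrow> complex" where
  "C21g p q r s t = 6*s*p^3 + 4*q^2*r - 3*p*r^2 - 21*s*p*q + 30*s*r + 10*p^2*t - 25*t*q - p^2*r*q"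

lemma L1_of_real: "complex_of_real (L1 p q r s t) = L1g (of_real p) (of_real q) (of_real r) (of_real s) (of_real t)"
  by (simp add: L1_def L1g_def)
lemma L2_of_real: "complex_of_real (L2 p q r s t) = L2g (of_real p) (of_real q) (of_real r) (of_real s) (of_real t)"
  by (simp add: L2_def L2g_def)
lemma D2_of_real: "complex_of_real (D2 p q r s t) = D2g (of_real p) (of_real q) (of_real r) (of_real s) (of_real t)"
  by (simp add: D2_def D2g_def)
lemma C21_of_real: "complex_of_real (C21 p q r s t) = C21g (of_real p) (of_real q) (of_real r) (of_real s) (of_real t)"
  by (simp add: C21_def C21g_def)

lemma L1_id:
  fixes a E1 E2 E3 :: complex
  shows "L1g (-(2*a+E1)) (a^2+2*a*E1+E2) (-(a^2*E1+2*a*E2+E3)) (a^2*E2+2*a*E3) (-(a^2*E3))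
    = 2*(a^3 - E1*a^2 + E2*a - E3)^2 * (E1^2*E2^2 - 4*E2^3 - 4*E1^3*E3 + 18*E1*E2*E3 - 27*E3^2)"
  unfolding L1g_def by algebra

lemma L2_tri:
  fixes x u v :: complex
  shows "L2g (-(3*x+u)) (3*x^2+3*x*u+v) (-(x^3+3*x^2*u+3*x*v)) (x^3*u+3*x^2*v) (-(x^3*v))
    = 3*(x^2-u*x+v)^2*(u^2-4*v)"
  unfolding L2g_def by algebra

lemma C21_tri:
  fixes x u v :: complex
  shows "C21g (-(3*x+u)) (3*x^2+3*x*u+v) (-(x^3+3*x^2*u+3*x*v)) (x^3*u+3*x^2*v) (-(x^3*v))
    = x * (3*(x^2-u*x+v)^2*(u^2-4*v))"
  unfolding C21g_def by algebra

lemma L2_dd: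
  fixes A B w :: complex
  shows "L2g (-(2*A+w)) (A^2+2*B+2*A*w) (-(2*A*B+A^2*w+2*B*w)) (B^2+2*A*B*w) (-(w*B^2))
    = 4*(A^2-4*B)*(w^2-A*w+B)^2"
  unfolding L2g_def by algebra

lemma D2_dd:
  fixes A B w :: complex
  shows "D2g (-(2*A+w)) (A^2+2*B+2*A*w) (-(2*A*B+A^2*w+2*B*w)) (B^2+2*A*B*w) (-(w*B^2))
    = 4*(A^2-4*B)^3*(w^2-A*w+B)^4"
  unfolding D2g_def by algebra


lemma triple:
  fixes p q r s t :: real and x u v :: complex
  defines "f \<equiv> quintic p q r s t"
  defines "d \<equiv> C21 p q r s t / L2 p q r s t"
  defines "F7 \<equiv> p + 5*d"
  defines "F6 \<equiv> q + 4*p*d + 10*d^2"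
  assumes hp: "complex_of_real p = -(3*x+u)" and hq: "complex_of_real q = 3*x^2+3*x*u+v"
    and hr: "complex_of_real r = -(x^3+3*x^2*u+3*x*v)" and hs: "complex_of_real s = x^3*u+3*x^2*v"
    and ht: "complex_of_real t = -(x^3*v)"
    and L2nz: "L2 p q r s t \<noteq> 0"
  shows "poly f d = 0 \<and> order d f = 3
    \<and> (\<forall>y. poly f (y + d) = y^3 * (y^2 + F7*y + F6))
    \<and> (L2 p q r s t > 0 \<longrightarrow>
        ((F6 > 0 \<and> F7 < 0 \<longrightarrow>
            (\<exists>a b. d < a \<and> a < b \<and> f = [:-d,1:]^3 * [:-a,1:] * [:-b,1:]))
       \<and> (F6 < 0 \<longrightarrow>
            (\<exists>a b. a < d \<and> d < b \<and> f = [:-d,1:]^3 * [:-a,1:] * [:-b,1:]))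
       \<and> (F6 > 0 \<and> F7 > 0 \<longrightarrow>
            (\<exists>a b. a < b \<and> b < d \<and> f = [:-d,1:]^3 * [:-a,1:] * [:-b,1:]))))"
proof -
  have eL2: "complex_of_real (L2 p q r s t) = 3*(x^2-u*x+v)^2*(u^2-4*v)"
    unfolding L2_of_real hp hq hr hs ht by (rule L2_tri)
  have eC: "complex_of_real (C21 p q r s t) = x * complex_of_real (L2 p q r s t)"
    unfolding C21_of_real hp hq hr hs ht eL2 by (rule C21_tri)
  have L2c: "complex_of_real (L2 p q r s t) \<noteq> 0" using L2nz by simp
  have dx: "complex_of_real d = x"
    unfolding d_def of_real_divide eC using L2c by simp
  have eF7: "complex_of_real F7 = 2*x - u"
    unfolding F7_def using hp dx by simp
  have eF6: "complex_of_real F6 = x^2 - u*x + v"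
    unfolding F6_def of_real_add of_real_mult of_real_power hp hq dx by (simp add: algebra_simps power2_eq_square)
  have key: "\<forall>y. poly f (y + d) = y^3 * (y^2 + F7*y + F6)"
  proof
    fix y :: real
    have "complex_of_real (poly f (y + d)) = complex_of_real (y^3 * (y^2 + F7*y + F6))"
      unfolding f_def quintic_def
      apply (simp only: poly_pCons poly_0 of_real_add of_real_mult of_real_power of_real_1 of_real_0 hp hq hr hs ht dx eF7 eF6)
      by algebra
    then show "poly f (y + d) = y^3 * (y^2 + F7*y + F6)" using of_real_eq_iff by blast
  qed
  have hL2r: "L2 p q r s t = 3*F6^2*(F7^2-4*F6)"
  proof -
    have "complex_of_real (L2 p q r s t) = complex_of_real (3*F6^2*(F7^2-4*F6))"
      unfolding eL2 of_real_mult of_real_power of_real_diff eF6 eF7 by simp algebra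
    then show ?thesis using of_real_eq_iff by blast
  qed
  have F6nz: "F6 \<noteq> 0" using L2nz hL2r by auto
  define g where "g = [:d^2 - F7*d + F6, F7 - 2*d, 1:]"
  have fpoly: "f = [:-d,1:]^3 * g"
  proof -
    have "poly f = poly ([:-d,1:]^3 * g)"
    proof
      fix z :: real
      have "poly f z = poly f ((z - d) + d)" by simp
      also have "\<dots> = (z-d)^3 * ((z-d)^2 + F7*(z-d) + F6)" using key by blast
      also have "\<dots> = poly ([:-d,1:]^3 * g) z" unfolding g_def by (simp add: algebra_simps power2_eq_square)
      finally show "poly f z = poly ([:-d,1:]^3 * g) z" .
    qed
    then show ?thesis by (simp add: poly_eq_poly_eq_iff)
  qed
  have fnz: "f \<noteq> 0" unfolding f_def quintic_def by simp
  have gd: "poly g d = F6" unfolding g_def by (simp add: algebra_simps power2_eq_square)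
  have ord: "order d f = 3"
  proof -
    have "order d f = order d ([:-d,1:]^3) + order d g"
      using fnz fpoly order_mult by metis
    moreover have "order d g = 0" using gd F6nz by (intro order_0I) simp
    ultimately show ?thesis by (simp add: order_power_n_n)
  qed
  have pd: "poly f d = 0" using key[rule_format, of 0] by simp
  have rest: "(L2 p q r s t > 0 \<longrightarrow>
        ((F6 > 0 \<and> F7 < 0 \<longrightarrow>
            (\<exists>a b. d < a \<and> a < b \<and> f = [:-d,1:]^3 * [:-a,1:] * [:-b,1:]))
       \<and> (F6 < 0 \<longrightarrow>
            (\<exists>a b. a < d \<and> d < b \<and> f = [:-d,1:]^3 * [:-a,1:] * [:-b,1:]))
       \<and> (F6 > 0 \<and> F7 > 0 \<longrightarrow>
            (\<exists>a b. a < b \<and> b < d \<and> f = [:-d,1:]^3 * [:-a,1:] * [:-b,1:]))))"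
  proof
    assume pos: "L2 p q r s t > 0"
    define \<Delta> where "\<Delta> = F7^2 - 4*F6"
    have F6sq: "F6^2 > 0" using F6nz by simp
    have "0 < (3*F6^2)*\<Delta>" using pos hL2r unfolding \<Delta>_def by simp
    moreover have "0 < 3*F6^2" using F6sq by simp
    ultimately have Dpos: "\<Delta> > 0" using zero_less_mult_pos by blast
    define sq where "sq = sqrt \<Delta>"
    have sq2: "sq^2 = \<Delta>" unfolding sq_def using Dpos by simp
    have sqpos: "sq > 0" unfolding sq_def using Dpos by simp
    define a where "a = d + (-F7 - sq)/2"
    define b where "b = d + (-F7 + sq)/2"
    have ab: "a < b" unfolding a_def b_def using sqpos by simp
    have gab: "g = [:-a,1:] * [:-b,1:]"
    proof -
      have e1: "a*b = d^2 - F7*d + F6"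
      proof -
        have "4*(a*b) = (2*d - F7)^2 - sq^2" unfolding a_def b_def by (simp add: field_simps power2_eq_square)
        also have "\<dots> = 4*(d^2 - F7*d + F6)" unfolding sq2 \<Delta>_def by (simp add: algebra_simps power2_eq_square)
        finally show ?thesis by simp
      qed
      have e2: "-a - b = F7 - 2*d" unfolding a_def b_def by (simp add: field_simps)
      have "[:-a,1:] * [:-b,1:] = [:b*a, -a-b, 1:]" by (simp add: algebra_simps)
      then show ?thesis unfolding g_def using e1 e2 by (simp add: mult.commute)
    qed
    have fab: "f = [:-d,1:]^3 * [:-a,1:] * [:-b,1:]" using fpoly gab by (metis mult.assoc)
    have sqF7: "sq < \<bar>F7\<bar> \<longleftrightarrow> F6 > 0"
    proof -
      have "sq < \<bar>F7\<bar> \<longleftrightarrow> sqrt \<Delta> < sqrt (F7^2)" unfolding sq_def by simp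
      also have "\<dots> \<longleftrightarrow> \<Delta> < F7^2" by (rule real_sqrt_less_iff)
      finally show ?thesis unfolding \<Delta>_def by simp
    qed
    have sqF7': "\<bar>F7\<bar> < sq \<longleftrightarrow> F6 < 0"
    proof -
      have "\<bar>F7\<bar> < sq \<longleftrightarrow> sqrt (F7^2) < sqrt \<Delta>" unfolding sq_def by simp
      also have "\<dots> \<longleftrightarrow> F7^2 < \<Delta>" by (rule real_sqrt_less_iff)
      finally show ?thesis unfolding \<Delta>_def by simp
    qed
    show "((F6 > 0 \<and> F7 < 0 \<longrightarrow>
            (\<exists>a b. d < a \<and> a < b \<and> f = [:-d,1:]^3 * [:-a,1:] * [:-b,1:]))
       \<and> (F6 < 0 \<longrightarrow>
            (\<exists>a b. a < d \<and> d < b \<and> f = [:-d,1:]^3 * [:-a,1:] * [:-b,1:]))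
       \<and> (F6 > 0 \<and> F7 > 0 \<longrightarrow>
            (\<exists>a b. a < b \<and> b < d \<and> f = [:-d,1:]^3 * [:-a,1:] * [:-b,1:])))"
    proof (intro conjI impI)
      assume "F6 > 0 \<and> F7 < 0"
      then have "sq < -F7" using sqF7 by auto
      then have "d < a" unfolding a_def by simp
      then show "\<exists>a b. d < a \<and> a < b \<and> f = [:-d,1:]^3 * [:-a,1:] * [:-b,1:]" using ab fab by blast
    next
      assume "F6 < 0"
      then have "\<bar>F7\<bar> < sq" using sqF7' by auto
      then have "a < d" "d < b" unfolding a_def b_def by auto
      then show "\<exists>a b. a < d \<and> d < b \<and> f = [:-d,1:]^3 * [:-a,1:] * [:-b,1:]" using fab by blast
    next
      assume "F6 > 0 \<and> F7 > 0"
      then have "sq < F7" using sqF7 by auto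
      then have "b < d" unfolding b_def by simp
      then show "\<exists>a b. a < b \<and> b < d \<and> f = [:-d,1:]^3 * [:-a,1:] * [:-b,1:]" using ab fab by blast
    qed
  qed
  show ?thesis using pd ord key rest by blast
qed


lemma m1: "[:c0,c1,c2,c3,c4:] * [:-a,1::'a::comm_ring_1:] = [:-a*c0, c0 - a*c1, c1-a*c2, c2-a*c3, c3 - a*c4, c4:]"
  by (simp add: algebra_simps)
lemma m2: "[:c0,c1,c2,c3:] * [:-a,1::'a::comm_ring_1:] = [:-a*c0, c0 - a*c1, c1-a*c2, c2-a*c3, c3:]"
  by (simp add: algebra_simps)
lemma m3: "[:c0,c1,c2:] * [:-a,1::'a::comm_ring_1:] = [:-a*c0, c0 - a*c1, c1-a*c2, c2:]"
  by (simp add: algebra_simps)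
lemma m4: "[:c0,c1:] * [:-a,1::'a::comm_ring_1:] = [:-a*c0, c0 - a*c1, c1:]"
  by (simp add: algebra_simps)
lemma m0: "[:-b,1:] * [:-a,1::'a::comm_ring_1:] = [:a*b, -b - a, 1:]"
  using m4[of "-b" 1 a] by simp

lemma coeffs5:
  assumes "map_poly complex_of_real (quintic p q r s t) = [:-x,1:]*[:-x,1:]*[:-b,1:]*[:-c,1:]*[:-e,1:]"
  shows "complex_of_real p = -(2*x+(b+c+e))"
    "complex_of_real q = x^2+2*x*(b+c+e)+(b*c+b*e+c*e)"
    "complex_of_real r = -(x^2*(b+c+e)+2*x*(b*c+b*e+c*e)+b*c*e)"
    "complex_of_real s = x^2*(b*c+b*e+c*e)+2*x*(b*c*e)"
    "complex_of_real t = -(x^2*(b*c*e))"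
proof -
  have "[:complex_of_real t, of_real s, of_real r, of_real q, of_real p, 1:] =
     [:-x,1:]*[:-x,1:]*[:-b,1:]*[:-c,1:]*[:-e,1:]"
    using assms by (simp add: quintic_def map_poly_pCons)
  also have "\<dots> = [:-e * (- c * (- b * (x * x))), - c * (- b * (x * x)) - e * (- b * (x * x) - c * (x * x - b * (- x - x))),
      - b * (x * x) - c * (x * x - b * (- x - x)) - e * (x * x - b * (- x - x) - c * (- x - x - b)),
      x * x - b * (- x - x) - c * (- x - x - b) - e * (- x - x - b - c), - x - x - b - c - e, 1:]"
    by (simp only: m0 m1 m2 m3 mult_1_right)
  finally have eqs: "complex_of_real t = -e * (- c * (- b * (x * x)))"
     "complex_of_real s = - c * (- b * (x * x)) - e * (- b * (x * x) - c * (x * x - b * (- x - x)))"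
     "complex_of_real r = - b * (x * x) - c * (x * x - b * (- x - x)) - e * (x * x - b * (- x - x) - c * (- x - x - b))"
     "complex_of_real q = x * x - b * (- x - x) - c * (- x - x - b) - e * (- x - x - b - c)"
     "complex_of_real p = - x - x - b - c - e"
    by simp_all
  show "complex_of_real p = -(2*x+(b+c+e))" using eqs by algebra
  show "complex_of_real q = x^2+2*x*(b+c+e)+(b*c+b*e+c*e)" using eqs by algebra
  show "complex_of_real r = -(x^2*(b+c+e)+2*x*(b*c+b*e+c*e)+b*c*e)" using eqs by algebra
  show "complex_of_real s = x^2*(b*c+b*e+c*e)+2*x*(b*c*e)" using eqs by algebra
  show "complex_of_real t = -(x^2*(b*c*e))" using eqs by algebra
qed


definition CONCL :: "real \<Rightarrow> real \<Rightarrow> real \<Rightarrow> real \<Rightarrow> real \<Rightarrow> bool" where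
  "CONCL p q r s t = (let f = quintic p q r s t; d = C21 p q r s t / L2 p q r s t;
     F7 = p + 5*d; F6 = q + 4*p*d + 10*d^2 in
    poly f d = 0 \<and> order d f = 3
    \<and> (\<forall>y. poly f (y + d) = y^3 * (y^2 + F7*y + F6))
    \<and> (L2 p q r s t > 0 \<longrightarrow>
        ((F6 > 0 \<and> F7 < 0 \<longrightarrow>
            (\<exists>a b. d < a \<and> a < b \<and> f = [:-d,1:]^3 * [:-a,1:] * [:-b,1:]))
       \<and> (F6 < 0 \<longrightarrow>
            (\<exists>a b. a < d \<and> d < b \<and> f = [:-d,1:]^3 * [:-a,1:] * [:-b,1:]))
       \<and> (F6 > 0 \<and> F7 > 0 \<longrightarrow>
            (\<exists>a b. a < b \<and> b < d \<and> f = [:-d,1:]^3 * [:-a,1:] * [:-b,1:])))))"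

lemma triple':
  fixes p q r s t :: real and x u v :: complex
  assumes "complex_of_real p = -(3*x+u)" "complex_of_real q = 3*x^2+3*x*u+v"
    "complex_of_real r = -(x^3+3*x^2*u+3*x*v)" "complex_of_real s = x^3*u+3*x^2*v"
    "complex_of_real t = -(x^3*v)" "L2 p q r s t \<noteq> 0"
  shows "CONCL p q r s t"
  unfolding CONCL_def Let_def by (rule triple[OF assms])

lemma dd_contra:
  fixes p q r s t :: real and A B w :: complex
  assumes "complex_of_real p = -(2*A+w)" "complex_of_real q = A^2+2*B+2*A*w"
    "complex_of_real r = -(2*A*B+A^2*w+2*B*w)" "complex_of_real s = B^2+2*A*B*w"
    "complex_of_real t = -(w*B^2)" "L2 p q r s t \<noteq> 0" "D2 p q r s t = 0"
  shows False
proof -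
  have "4*(A^2-4*B)^3*(w^2-A*w+B)^4 = 0"
    using assms(7) unfolding D2_dd[symmetric] assms(1-5)[symmetric] D2_of_real[symmetric] by simp
  then have "(A^2-4*B) = 0 \<or> (w^2-A*w+B) = 0" by simp
  then have "4*(A^2-4*B)*(w^2-A*w+B)^2 = 0" by auto
  then have "L2 p q r s t = 0"
    unfolding L2_dd[symmetric] assms(1-5)[symmetric] L2_of_real[symmetric] by simp
  then show False using assms(6) by simp
qed

lemma double_case:
  fixes p q r s t :: real and x b c e :: complex
  assumes H: "map_poly complex_of_real (quintic p q r s t) = [:-x,1:]*[:-x,1:]*[:-b,1:]*[:-c,1:]*[:-e,1:]"
    and L1z: "L1 p q r s t = 0" and L2nz: "L2 p q r s t \<noteq> 0" and D2z: "D2 p q r s t = 0"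
  shows "CONCL p q r s t"
proof -
  note cf = coeffs5[OF H]
  have z: "2*(x^3 - (b+c+e)*x^2 + (b*c+b*e+c*e)*x - b*c*e)^2 * ((b+c+e)^2*(b*c+b*e+c*e)^2 - 4*(b*c+b*e+c*e)^3 - 4*(b+c+e)^3*(b*c*e) + 18*(b+c+e)*(b*c+b*e+c*e)*(b*c*e) - 27*(b*c*e)^2) = 0"
    using L1z unfolding L1_id[symmetric] cf[symmetric] L1_of_real[symmetric] by simp
  have g1: "x^3 - (b+c+e)*x^2 + (b*c+b*e+c*e)*x - b*c*e = (x-b)*(x-c)*(x-e)" by algebra
  have g2: "(b+c+e)^2*(b*c+b*e+c*e)^2 - 4*(b*c+b*e+c*e)^3 - 4*(b+c+e)^3*(b*c*e) + 18*(b+c+e)*(b*c+b*e+c*e)*(b*c*e) - 27*(b*c*e)^2 = ((b-c)*(b-e)*(c-e))^2" by algebra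
  from z have "2*((x-b)*(x-c)*(x-e))^2 * ((b-c)*(b-e)*(c-e))^2 = 0" unfolding g1 g2 .
  then have "x = b \<or> x = c \<or> x = e \<or> b = c \<or> b = e \<or> c = e" by simp
  then show ?thesis
  proof (elim disjE)
    assume h: "x = b"
    show ?thesis
      by (rule triple'[where x=x and u="c+e" and v="c*e"]) ((use cf h in algebra), (use cf h in algebra), (use cf h in algebra), (use cf h in algebra), (use cf h in algebra), rule L2nz)
  next
    assume h: "x = c"
    show ?thesis
      by (rule triple'[where x=x and u="b+e" and v="b*e"]) ((use cf h in algebra), (use cf h in algebra), (use cf h in algebra), (use cf h in algebra), (use cf h in algebra), rule L2nz)
  next
    assume h: "x = e"
    show ?thesis
      by (rule triple'[where x=x and u="b+c" and v="b*c"]) ((use cf h in algebra), (use cf h in algebra), (use cf h in algebra), (use cf h in algebra), (use cf h in algebra), rule L2nz)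
  next
    assume h: "b = c"
    show ?thesis
      by (rule dd_contra[where p=p and q=q and r=r and s=s and t=t and A="x+b" and w=e and B="x*b", THEN FalseE]) ((use cf h in algebra), (use cf h in algebra), (use cf h in algebra), (use cf h in algebra), (use cf h in algebra), rule L2nz, rule D2z)
  next
    assume h: "b = e"
    show ?thesis
      by (rule dd_contra[where p=p and q=q and r=r and s=s and t=t and A="x+b" and w=c and B="x*b", THEN FalseE]) ((use cf h in algebra), (use cf h in algebra), (use cf h in algebra), (use cf h in algebra), (use cf h in algebra), rule L2nz, rule D2z)
  next
    assume h: "c = e"
    show ?thesis
      by (rule dd_contra[where p=p and q=q and r=r and s=s and t=t and A="x+c" and w=b and B="x*c", THEN FalseE]) ((use cf h in algebra), (use cf h in algebra), (use cf h in algebra), (use cf h in algebra), (use cf h in algebra), rule L2nz, rule D2z)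
  qed
qed


lemma from_list:
  fixes p q r s t :: real and a0 a1 a2 a3 a4 :: complex
  assumes H: "map_poly complex_of_real (quintic p q r s t) = [:-a0,1:] * ([:-a1,1:] * ([:-a2,1:] * ([:-a3,1:] * [:-a4,1:])))"
    and ij: "i < 5" "i < j" "j < (5::nat)" "[a0,a1,a2,a3,a4]!i = [a0,a1,a2,a3,a4]!j"
    and L1z: "L1 p q r s t = 0" and L2nz: "L2 p q r s t \<noteq> 0" and D2z: "D2 p q r s t = 0"
  shows "CONCL p q r s t"
proof -
  have "a0=a1 \<or> a0=a2 \<or> a0=a3 \<or> a0=a4 \<or> a1=a2 \<or> a1=a3 \<or> a1=a4 \<or> a2=a3 \<or> a2=a4 \<or> a3=a4"
    using ij by (auto simp: less_Suc_eq numeral_eq_Suc)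
  then show ?thesis
  proof (elim disjE)
    assume h: "a0=a1" show ?thesis
      by (rule double_case[where x=a0 and b=a2 and c=a3 and e=a4, OF _ L1z L2nz D2z]) (use H in \<open>simp only: h mult_ac\<close>)
  next
    assume h: "a0=a2" show ?thesis
      by (rule double_case[where x=a0 and b=a1 and c=a3 and e=a4, OF _ L1z L2nz D2z]) (use H in \<open>simp only: h mult_ac\<close>)
  next
    assume h: "a0=a3" show ?thesis
      by (rule double_case[where x=a0 and b=a1 and c=a2 and e=a4, OF _ L1z L2nz D2z]) (use H in \<open>simp only: h mult_ac\<close>)
  next
    assume h: "a0=a4" show ?thesis
      by (rule double_case[where x=a0 and b=a1 and c=a2 and e=a3, OF _ L1z L2nz D2z]) (use H in \<open>simp only: h mult_ac\<close>)
  next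
    assume h: "a1=a2" show ?thesis
      by (rule double_case[where x=a1 and b=a0 and c=a3 and e=a4, OF _ L1z L2nz D2z]) (use H in \<open>simp only: h mult_ac\<close>)
  next
    assume h: "a1=a3" show ?thesis
      by (rule double_case[where x=a1 and b=a0 and c=a2 and e=a4, OF _ L1z L2nz D2z]) (use H in \<open>simp only: h mult_ac\<close>)
  next
    assume h: "a1=a4" show ?thesis
      by (rule double_case[where x=a1 and b=a0 and c=a2 and e=a3, OF _ L1z L2nz D2z]) (use H in \<open>simp only: h mult_ac\<close>)
  next
    assume h: "a2=a3" show ?thesis
      by (rule double_case[where x=a2 and b=a0 and c=a1 and e=a4, OF _ L1z L2nz D2z]) (use H in \<open>simp only: h mult_ac\<close>)
  next
    assume h: "a2=a4" show ?thesis
      by (rule double_case[where x=a2 and b=a0 and c=a1 and e=a3, OF _ L1z L2nz D2z]) (use H in \<open>simp only: h mult_ac\<close>)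
  next
    assume h: "a3=a4" show ?thesis
      by (rule double_case[where x=a3 and b=a0 and c=a1 and e=a2, OF _ L1z L2nz D2z]) (use H in \<open>simp only: h mult_ac\<close>)
  qed
qed

lemma roots5_spec:
  "length (roots5 (quintic p q r s t)) = 5 \<and>
   map_poly complex_of_real (quintic p q r s t) = prod_list (map (\<lambda>a. [:-a, 1:]) (roots5 (quintic p q r s t)))"
proof -
  define F where "F = map_poly complex_of_real (quintic p q r s t)"
  have F: "F = [:complex_of_real t, of_real s, of_real r, of_real q, of_real p, 1:]"
    unfolding F_def quintic_def by (simp add: map_poly_pCons)
  have degF: "degree F = 5" unfolding F by simp
  have lcF: "lead_coeff F = 1" unfolding F by simp
  obtain rs where rs: "mset rs = proots F" using ex_mset by blast
  have len: "length rs = 5" using size_proots_complex[of F] rs degF by (metis size_mset)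
  have "F = smult (lead_coeff F) (\<Prod>x\<in>#proots F. [:-x, 1:])"
    by (rule complex_poly_decompose_multiset [symmetric])
  also have "\<dots> = (\<Prod>x\<in>#proots F. [:-x, 1:])" using lcF by simp
  also have "\<dots> = prod_list (map (\<lambda>a. [:-a, 1:]) rs)"
    by (subst prod_mset_prod_list [symmetric]) (simp add: rs[symmetric])
  finally have "\<exists>as. length as = 5 \<and> F = prod_list (map (\<lambda>a. [:-a, 1:]) as)" using len by blast
  then show ?thesis unfolding roots5_def F_def by (rule someI_ex)
qed

lemma helper:
  fixes p q r s t :: real
  assumes "disc5 (quintic p q r s t) = 0" and L1z: "L1 p q r s t = 0" and L2nz: "L2 p q r s t \<noteq> 0"
    and D2z: "D2 p q r s t = 0"
  shows "CONCL p q r s t"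
proof -
  define as where "as = roots5 (quintic p q r s t)"
  have len: "length as = 5" and H: "map_poly complex_of_real (quintic p q r s t) = prod_list (map (\<lambda>a. [:-a, 1:]) as)"
    using roots5_spec unfolding as_def by auto
  have "(\<Prod>i<5. \<Prod>j\<in>{i<..<5}. (as ! i - as ! j)^2) = 0"
    using assms(1) unfolding disc5_def as_def Let_def by simp
  then obtain i j where ij: "i < 5" "i < j" "j < (5::nat)" "(as ! i - as ! j)^2 = 0"
    by (auto simp: prod_zero_iff)
  have aseq: "as = [as!0, as!1, as!2, as!3, as!4]"
    using len by (intro nth_equalityI) (auto simp: less_Suc_eq numeral_eq_Suc)
  have H': "map_poly complex_of_real (quintic p q r s t) = [:-(as!0),1:] * ([:-(as!1),1:] * ([:-(as!2),1:] * ([:-(as!3),1:] * [:-(as!4),1:])))"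
    using H by (subst (asm) aseq) simp
  have e: "[as!0, as!1, as!2, as!3, as!4]!i = [as!0, as!1, as!2, as!3, as!4]!j"
    using ij(4) aseq by (metis power_eq_0_iff right_minus_eq zero_neq_numeral)
  show ?thesis by (rule from_list[OF H' ij(1-3) e L1z L2nz D2z])
qed

theorem mainTheorem10:
  fixes p q r s t :: real
  defines "f \<equiv> quintic p q r s t"
  defines "d \<equiv> C21 p q r s t / L2 p q r s t"
  defines "F7 \<equiv> p + 5*d"
  defines "F6 \<equiv> q + 4*p*d + 10*d^2"
  assumes "disc5 f = 0" and "L1 p q r s t = 0" and "L2 p q r s t \<noteq> 0"
    and "D2 p q r s t = 0"
  shows "poly f d = 0 \<and> order d f = 3
    \<and> (\<forall>y. poly f (y + d) = y^3 * (y^2 + F7*y + F6))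
    \<and> (L2 p q r s t > 0 \<longrightarrow>
        ((F6 > 0 \<and> F7 < 0 \<longrightarrow>
            (\<exists>a b. d < a \<and> a < b \<and> f = [:-d,1:]^3 * [:-a,1:] * [:-b,1:]))
       \<and> (F6 < 0 \<longrightarrow>
            (\<exists>a b. a < d \<and> d < b \<and> f = [:-d,1:]^3 * [:-a,1:] * [:-b,1:]))
       \<and> (F6 > 0 \<and> F7 > 0 \<longrightarrow>
            (\<exists>a b. a < b \<and> b < d \<and> f = [:-d,1:]^3 * [:-a,1:] * [:-b,1:]))))"
  using helper[OF assms(5)[unfolded f_def] assms(6-8)]
  unfolding CONCL_def Let_def f_def d_def F7_def F6_def .

end
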